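(* Let $\mathfrak g=\mathbb R f_1\ltimes_M\mathbb R^3$ be a 4-dimensional almost abelian Lie algebra, where $\mathbb R^3$ is an abelian ideal with basis $\{f_2,f_3,f_4\}$ and $M=\operatorname{ad}_{f_1}|_{\mathbb R^3}$ has matrix $\begin{pmatrix}\mu & w^{T}\\ 0 & A\end{pmatrix}$ with $\mu\in\mathbb R$, $w\in\mathbb R^2$, $A\in\mathfrak{gl}(2,\mathbb R)$. If $\operatorname{tr}(A)\neq 0$, then $\mathfrak g$ admits an LCS structure.
   Context: An LCS structure on a Lie algebra $\mathfrak g$ is a pair $(\omega,\theta)$ with $\omega\in\Lambda^2\mathfrak g^*$ non-degenerate and $\theta\in\mathfrak g^*$ closed and nonzero, such that $d\omega=\theta\wedge\omega$ ($d$ the Chevalley–Eilenberg differential). *)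

theory Defs
  imports "HOL-Analysis.Analysis"
begin

text \<open>Chevalley--Eilenberg differential of a 1-form theta and of a 2-form omega on a
Lie algebra with bracket br (convention: d theta (x,y) = - theta [x,y]).\<close>

definition ce_d1 :: "('a \<Rightarrow> 'a \<Rightarrow> 'a) \<Rightarrow> ('a \<Rightarrow> real) \<Rightarrow> 'a \<Rightarrow> 'a \<Rightarrow> real" where
  "ce_d1 br \<theta> x y = - \<theta> (br x y)"

definition ce_d2 :: "('a \<Rightarrow> 'a \<Rightarrow> 'a) \<Rightarrow> ('a \<Rightarrow> 'a \<Rightarrow> real) \<Rightarrow> 'a \<Rightarrow> 'a \<Rightarrow> 'a \<Rightarrow> real" where
  "ce_d2 br \<omega> x y z = - \<omega> (br x y) z + \<omega> (br x z) y - \<omega> (br y z) x"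

definition wedge12 :: "('a \<Rightarrow> real) \<Rightarrow> ('a \<Rightarrow> 'a \<Rightarrow> real) \<Rightarrow> 'a \<Rightarrow> 'a \<Rightarrow> 'a \<Rightarrow> real" where
  "wedge12 \<theta> \<omega> x y z = \<theta> x * \<omega> y z - \<theta> y * \<omega> x z + \<theta> z * \<omega> x y"

definition lcs_structure ::
  "('a::real_vector \<Rightarrow> 'a \<Rightarrow> 'a) \<Rightarrow> ('a \<Rightarrow> 'a \<Rightarrow> real) \<Rightarrow> ('a \<Rightarrow> real) \<Rightarrow> bool" where
  "lcs_structure br \<omega> \<theta> \<longleftrightarrow>
     bilinear \<omega> \<and> (\<forall>x y. \<omega> x y = - \<omega> y x) \<and>
     (\<forall>x. (\<forall>y. \<omega> x y = 0) \<longrightarrow> x = 0) \<and>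
     linear \<theta> \<and> (\<forall>x y. ce_d1 br \<theta> x y = 0) \<and> \<theta> \<noteq> (\<lambda>_. 0) \<and>
     (\<forall>x y z. ce_d2 br \<omega> x y z = wedge12 \<theta> \<omega> x y z)"

text \<open>The almost abelian Lie algebra R f1 \<ltimes>_M R^3, modelled on real \<times> real^3:
 (s,u) = s f1 + u, with u in the abelian ideal R^3 = span{f2,f3,f4};
 [f1, v] = M v for v in R^3, and R^3 abelian.\<close>
definition aa_bracket :: "real^3^3 \<Rightarrow> (real \<times> (real^3)) \<Rightarrow> (real \<times> (real^3)) \<Rightarrow> (real \<times> (real^3))" where
  "aa_bracket M p q = (0, fst p *\<^sub>R (M *v snd q) - fst q *\<^sub>R (M *v snd p))"

text \<open>The matrix (mu, w^T; 0, A) of M in the basis f2,f3,f4 (columns = images of basis vectors).\<close>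
definition block_M :: "real \<Rightarrow> real^2 \<Rightarrow> real^2^2 \<Rightarrow> real^3^3" where
  "block_M \<mu> w A = (\<chi> i j.
     if i = 1 then (if j = 1 then \<mu> else if j = 2 then w$1 else w$2)
     else if j = 1 then 0
     else if i = 2 then (if j = 2 then A$1$1 else A$1$2)
     else (if j = 2 then A$2$1 else A$2$2))"

end

theory Submission
  imports Defs
begin

definition om :: "(real \<times> (real^3)) \<Rightarrow> (real \<times> (real^3)) \<Rightarrow> real" where
  "om p q = fst p * (snd q)$1 - fst q * (snd p)$1
            + (snd p)$2 * (snd q)$3 - (snd p)$3 * (snd q)$2"

lemma Mv: "(block_M \<mu> w A *v v) $ 1 = \<mu> * v$1 + w$1 * v$2 + w$2 * v$3"
  "(block_M \<mu> w A *v v) $ 2 = A$1$1 * v$2 + A$1$2 * v$3"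
  "(block_M \<mu> w A *v v) $ 3 = A$2$1 * v$2 + A$2$2 * v$3"
  by (simp_all add: matrix_vector_mult_def block_M_def sum_3)

theorem lemma4p4:
  fixes \<mu> :: real and w :: "real^2" and A :: "real^2^2"
  assumes "trace A \<noteq> 0"
  shows "\<exists>\<omega> \<theta>. lcs_structure (aa_bracket (block_M \<mu> w A)) \<omega> \<theta>"
proof (intro exI)
  let ?th = "\<lambda>p::real \<times> (real^3). - trace A * fst p"
  have tr: "trace A = A$1$1 + A$2$2" by (simp add: trace_def sum_2)
  have bil: "bilinear om"
    unfolding bilinear_def linear_iff om_def by (simp add: algebra_simps)
  have nd: "\<forall>x. (\<forall>y. om x y = 0) \<longrightarrow> x = 0"
  proof (intro allI impI)
    fix x :: "real \<times> (real^3)" assume h: "\<forall>y. om x y = 0"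
    have a: "om x (1,0) = 0" "om x (0, axis 1 1) = 0" "om x (0, axis 2 1) = 0" "om x (0, axis 3 1) = 0"
      using h by auto
    hence "fst x = 0" "snd x $ 1 = 0" "snd x $ 2 = 0" "snd x $ 3 = 0"
      by (auto simp: om_def axis_def)
    thus "x = 0"
      by (simp add: prod_eq_iff vec_eq_iff forall_3)
  qed
  show "lcs_structure (aa_bracket (block_M \<mu> w A)) om ?th"
    unfolding lcs_structure_def
  proof (intro conjI)
    show "bilinear om" by (rule bil)
    show "\<forall>x y. om x y = - om y x" by (simp add: om_def)
    show "\<forall>x. (\<forall>y. om x y = 0) \<longrightarrow> x = 0" by (rule nd)
    show "linear ?th" unfolding linear_iff by (simp add: algebra_simps)
    show "\<forall>x y. ce_d1 (aa_bracket (block_M \<mu> w A)) ?th x y = 0"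
      by (simp add: ce_d1_def aa_bracket_def)
    show "?th \<noteq> (\<lambda>_. 0)"
    proof
      assume "?th = (\<lambda>_. 0)"
      hence "?th (1,0) = 0" by meson
      thus False using assms by simp
    qed
    show "\<forall>x y z. ce_d2 (aa_bracket (block_M \<mu> w A)) om x y z = wedge12 ?th om x y z"
      apply (intro allI) apply (simp add: ce_d2_def wedge12_def aa_bracket_def om_def Mv tr)
      by (simp add: algebra_simps)
  qed
qed

end
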